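(* Let $s\ge 1$ and let $n_1,\dots,n_s,k_1,\dots,k_s$ be positive integers. Then there exist finitely many polynomials $g_i\in\mathbb{Q}[X]$ and positive integers $m_i,\ell_i$ with $\ell_i\le n_1+\cdots+n_s$ for every $i$, such that $$\frac{1}{(X^{k_1}-1)^{n_1}\cdots(X^{k_s}-1)^{n_s}}=\sum_{i}\frac{g_i}{(X^{m_i}-1)^{\ell_i}}$$ in the field of rational functions $\mathbb{Q}(X)$. *)

theory Defs
  imports "HOL-Computational_Algebra.Polynomial" "HOL-Computational_Algebra.Fraction_Field"
begin

end

theory Submission
  imports Defs
begin

lemma sub1_dvd_pow: "(x::'a::comm_ring_1) - 1 dvd x ^ t - 1"
proof (induction t)
  case 0 then show ?case by simp
next
  case (Suc t)
  have "x ^ Suc t - 1 = x * (x ^ t - 1) + (x - 1)" by (simp add: algebra_simps)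
  then show ?case using Suc by (metis dvd_add dvd_mult dvd_refl)
qed

lemma monom_dvd: "(monom (1::rat) k - 1) dvd (monom 1 (k * t) - 1)"
proof -
  have "monom (1::rat) (k * t) = (monom 1 k) ^ t" by (simp add: monom_power)
  then show ?thesis using sub1_dvd_pow by metis
qed

lemma monom_nz: "M > 0 \<Longrightarrow> monom (1::rat) M - 1 \<noteq> 0"
proof
  assume "M > 0" "monom (1::rat) M - 1 = 0"
  then have "coeff (monom (1::rat) M - 1) M = 0" by simp
  with \<open>M > 0\<close> show False by simp
qed

theorem lemma2p1:
  fixes s :: nat and n k :: "nat \<Rightarrow> nat"
  assumes "s \<ge> 1"
    and "\<forall>j<s. n j > 0" and "\<forall>j<s. k j > 0"
  shows "\<exists>(r::nat) (g :: nat \<Rightarrow> rat poly) (m :: nat \<Rightarrow> nat) (l :: nat \<Rightarrow> nat).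
           (\<forall>i<r. m i > 0 \<and> l i > 0 \<and> l i \<le> (\<Sum>j<s. n j)) \<and>
           Fract 1 (\<Prod>j<s. (monom 1 (k j) - 1) ^ n j)
             = (\<Sum>i<r. Fract (g i) ((monom 1 (m i) - 1) ^ l i))"
proof -
  define M where "M = (\<Prod>j<s. k j)"
  define N where "N = (\<Sum>j<s. n j)"
  define P where "P = (\<Prod>j<s. (monom (1::rat) (k j) - 1) ^ n j)"
  define D where "D = (monom (1::rat) M - 1) ^ N"
  have M0: "M > 0" unfolding M_def using assms(3) by (simp add: prod_pos)
  have N0: "N > 0" unfolding N_def using assms(1,2)
    by (metis One_nat_def Suc_le_eq lessThan_iff finite_lessThan gr0I sum_eq_0_iff)
  have D0: "D \<noteq> 0" unfolding D_def using monom_nz[OF M0] by simp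
  have "\<forall>j<s. monom (1::rat) (k j) - 1 dvd monom 1 M - 1"
  proof (intro allI impI)
    fix j assume "j < s"
    then have "M = k j * (\<Prod>i\<in>{..<s}-{j}. k i)" unfolding M_def
      by (simp add: prod.remove)
    then show "monom (1::rat) (k j) - 1 dvd monom 1 M - 1" using monom_dvd by metis
  qed
  then have "P dvd (\<Prod>j<s. (monom (1::rat) M - 1) ^ n j)"
    unfolding P_def by (intro prod_dvd_prod) (simp add: dvd_power_same)
  also have "\<dots> = D" unfolding D_def N_def by (simp add: power_sum)
  finally obtain Q where Q: "D = P * Q" by (auto elim: dvdE)
  have P0: "P \<noteq> 0" using D0 Q by auto
  have "Fract 1 P = Fract Q D" using P0 D0 Q by (simp add: eq_fract mult.commute)
  then have "(\<forall>i<(1::nat). M > 0 \<and> N > 0 \<and> N \<le> N) \<and>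
     Fract 1 P = (\<Sum>i<(1::nat). Fract Q ((monom 1 M - 1) ^ N))"
    using M0 N0 unfolding D_def by simp
  then have H: "(\<forall>i<(1::nat). M > 0 \<and> N > 0 \<and> N \<le> (\<Sum>j<s. n j)) \<and>
     Fract 1 (\<Prod>j<s. (monom (1::rat) (k j) - 1) ^ n j) = (\<Sum>i<(1::nat). Fract Q ((monom 1 M - 1) ^ N))"
    unfolding P_def N_def by simp
  show ?thesis
    by (rule exI[where x="1::nat"], rule exI[where x="\<lambda>_. Q"], rule exI[where x="\<lambda>_. M"],
        rule exI[where x="\<lambda>_. N"], rule H)
qed

end
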